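(* Let $w$ be a word over $\Sigma$ and let $(h_1,p_1)<(h_2,p_2)<\cdots<(h_s,p_s)$ be Abelian periods of $w$ such that $(|w|-h_i)\bmod p_i=t$ for all $1\le i\le s$, for a common integer $t>0$. Then for every letter $a\in\Sigma$: if $(h_1,p_1)$ is an Abelian period of $wa$, then $(h_2,p_2),\dots,(h_s,p_s)$ are also Abelian periods of $wa$.
   Context: Words are finite sequences over a finite alphabet $\Sigma=\{a_1,\dots,a_\sigma\}$; $wa$ denotes $w$ followed by the letter $a$. The Parikh vector of a word $u$ is $\mathcal{P}_u=(|u|_{a_1},\dots,|u|_{a_\sigma})$, where $|u|_a$ is the number of occurrences of $a$ in $u$; its norm is $|\mathcal{P}_u|=|u|$. $\mathcal{P}\subset\mathcal{Q}$ means $\mathcal{P}[j]\le\mathcal{Q}[j]$ for all $j$ and $|\mathcal{P}|<|\mathcal{Q}|$. A word $w$ has Abelian period $(h,p)$ (integers $h\ge0$, $p\ge1$) if $w=u_0u_1\cdots u_{k-1}u_k$ for some $k\ge 2$ (with $u_0,u_k$ possibly empty) with $|u_0|=h$, $|u_1|=p$ and $\mathcal{P}_{u_0}\subset\mathcal{P}_{u_1}=\cdots=\mathcal{P}_{u_{k-1}}\supset\mathcal{P}_{u_k}$; the tail $u_k$ then has length $(|w|-h)\bmod p$. Pairs are ordered by $(h,p)<(h',p')$ iff $p<p'$, or $p=p'$ and $h<h'$. *)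

theory Defs
  imports Main
begin

definition parikh :: "'a list \<Rightarrow> ('a \<Rightarrow> nat)" where
  "parikh u = (\<lambda>c. count_list u c)"

definition parikh_sub :: "'a list \<Rightarrow> 'a list \<Rightarrow> bool" where
  "parikh_sub u v \<longleftrightarrow> (\<forall>c. parikh u c \<le> parikh v c) \<and> length u < length v"

text \<open>w has Abelian period (h,p): w = u_0 u_1 ... u_k with k \<ge> 2, |u_0| = h, |u_1| = p,
  P(u_0) \<subset> P(u_1) = ... = P(u_{k-1}) \<supset> P(u_k).\<close>
definition abelian_period :: "'a list \<Rightarrow> nat \<Rightarrow> nat \<Rightarrow> bool" where
  "abelian_period w h p \<longleftrightarrow> p \<ge> 1 \<and>
     (\<exists>us k. k \<ge> 2 \<and> length us = Suc k \<and> concat us = w \<and>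
        length (us ! 0) = h \<and> length (us ! 1) = p \<and>
        parikh_sub (us ! 0) (us ! 1) \<and>
        (\<forall>i. 1 \<le> i \<and> i < k \<longrightarrow> parikh (us ! i) = parikh (us ! 1)) \<and>
        parikh_sub (us ! k) (us ! 1))"

definition ap_less :: "nat \<times> nat \<Rightarrow> nat \<times> nat \<Rightarrow> bool" where
  "ap_less x y \<longleftrightarrow> snd x < snd y \<or> (snd x = snd y \<and> fst x < fst y)"

end

theory Submission imports Defs "HOL-Library.Multiset" begin

definition seg :: "'a list \<Rightarrow> nat \<Rightarrow> nat \<Rightarrow> 'a list" where
  "seg x i l = take l (drop i x)"

definition ap_char :: "'a list \<Rightarrow> nat \<Rightarrow> nat \<Rightarrow> bool" where
  "ap_char x h p \<longleftrightarrow> 1 \<le> p \<and> h \<le> length x \<and> 1 \<le> (length x - h) div p \<and>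
     parikh_sub (take h x) (seg x h p) \<and>
     (\<forall>j. 1 \<le> j \<and> j < (length x - h) div p \<longrightarrow> parikh (seg x (h+j*p) p) = parikh (seg x h p)) \<and>
     parikh_sub (drop (h + (length x - h) div p * p) x) (seg x h p)"

lemma parikh_len: "parikh u = parikh v \<Longrightarrow> length u = length v"
proof -
  assume "parikh u = parikh v"
  then have "mset u = mset v"
    by (intro multiset_eqI) (simp add: count_mset parikh_def fun_eq_iff)
  then show ?thesis by (metis size_mset)
qed

lemma parikh_le_eq:
  assumes "\<forall>c. parikh u c \<le> parikh v c" "length u = length v"
  shows "parikh u = parikh v"
proof -
  have "mset u \<subseteq># mset v" using assms(1)
    by (simp add: subseteq_mset_def count_mset parikh_def)
  moreover have "size (mset u) = size (mset v)" using assms(2) by simp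
  ultimately have "mset u = mset v"
    by (metis mset_subset_size subset_mset.le_less less_irrefl)
  then show ?thesis by (simp add: parikh_def fun_eq_iff flip: count_mset)
qed

lemma nth_concat_split:
  assumes "i < length us"
  shows "us!i = take (length (us!i)) (drop (length (concat (take i us))) (concat us))"
proof -
  have "concat us = concat (take i us) @ us!i @ concat (drop (Suc i) us)"
    using assms by (metis append_take_drop_id concat_append Cons_nth_drop_Suc concat.simps(2))
  then show ?thesis by (metis append_eq_conv_conj)
qed

lemma concat_blocks:
  "concat (map (\<lambda>j. seg x (h+j*p) p) [0..<m]) = take (m*p) (drop h x)"
proof (induction m)
  case 0 then show ?case by simp
next
  case (Suc m)
  have e: "take (m*p + p) (drop h x) = take (m*p) (drop h x) @ take p (drop (m*p + h) x)"
    by (simp only: take_add drop_drop)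
  have "Suc m * p = m*p + p" by simp
  then show ?case using Suc e by (simp add: seg_def add.commute[of h] add.commute[of p])
qed

lemma ap_dest:
  assumes "abelian_period x h p"
  shows "ap_char x h p"
proof -
  obtain us k where k2: "k\<ge>2" and lus: "length us = Suc k" and cx: "concat us = x"
    and l0: "length(us!0)=h" and l1: "length(us!1)=p" and s0: "parikh_sub (us!0) (us!1)"
    and mid: "\<forall>i. 1\<le>i\<and>i<k \<longrightarrow> parikh(us!i) = parikh(us!1)"
    and sk: "parikh_sub (us!k) (us!1)" and p1: "p \<ge> 1"
    using assms unfolding abelian_period_def by blast
  have lm: "length(us!i) = p" if "1\<le>i" "i<k" for i using parikh_len mid that l1 by metis
  define r where "r = length(us!k)"
  have rp: "r < p" using sk l1 r_def parikh_sub_def by auto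
  have hp: "h < p" using s0 l0 l1 parikh_sub_def by auto
  have pre: "length (concat (take i us)) = h + (i-1)*p" if "1\<le>i" "i\<le>k" for i
    using that
  proof (induction i)
    case 0 then show ?case by simp
  next
    case (Suc i)
    show ?case
    proof (cases "i = 0")
      case True
      then show ?thesis using lus l0 by (simp add: take_Suc_conv_app_nth)
    next
      case False
      then have "length (concat (take i us)) = h + (i-1)*p" using Suc by simp
      moreover have "length (us!i) = p" using lm False Suc by simp
      ultimately show ?thesis using Suc lus False
        by (simp add: take_Suc_conv_app_nth) (cases i; simp)
    qed
  qed
  have xsplit: "x = concat (take k us) @ us!k"
    using cx lus by (metis append_take_drop_id concat_append Cons_nth_drop_Suc concat.simps(2)
         concat.simps(1) append_Nil2 drop_all le_refl lessI)
  have lx: "length x = h + (k-1)*p + r"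
    using xsplit pre[of k] k2 r_def by simp
  have dv: "(length x - h) div p = k-1" and md: "(length x - h) mod p = r"
    using lx rp by auto
  have b0: "seg x h p = us!1"
    using nth_concat_split[of 1 us] lus k2 pre[of 1] l1 cx by (simp add: seg_def)
  have bj: "seg x (h+j*p) p = us!(j+1)" if "j+1 < k" for j
    using nth_concat_split[of "j+1" us] lus that pre[of "j+1"] lm[of "j+1"] cx
    by (simp add: seg_def)
  have tk: "take h x = us!0"
    using nth_concat_split[of 0 us] lus l0 cx by simp
  have tl: "drop (h + (k-1)*p) x = us!k"
    using xsplit pre[of k] k2 by simp
  have m1: "1 \<le> k - 1" using k2 by simp
  have hx: "h \<le> length x" using lx by simp
  have blocks: "\<forall>j. 1 \<le> j \<and> j < k - 1 \<longrightarrow> parikh (seg x (h+j*p) p) = parikh (seg x h p)"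
  proof (intro allI impI)
    fix j assume "1 \<le> j \<and> j < k - 1"
    then show "parikh (seg x (h+j*p) p) = parikh (seg x h p)"
    proof -
      have "Suc j < k" "1 \<le> Suc j" using \<open>1 \<le> j \<and> j < k - 1\<close> by auto
      then have e1: "seg x (h+j*p) p = us!(Suc j)" using bj[of j] by simp
      have "parikh (us!(Suc j)) = parikh (us!1)" using mid \<open>Suc j < k\<close> \<open>1 \<le> Suc j\<close> by blast
      then show ?thesis using e1 b0 by metis
    qed
  qed
  have s0': "parikh_sub (take h x) (seg x h p)" using s0 tk b0 by simp
  have sk': "parikh_sub (drop (h + (k-1)*p) x) (seg x h p)" using sk tl b0 by simp
  show ?thesis
    unfolding ap_char_def dv
    apply (intro conjI)
         apply (rule p1)
        apply (rule hx)
       apply (rule m1)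
      apply (rule s0')
     apply (rule blocks)
    apply (rule sk')
    done
qed


lemma div_ge1_le: "1 \<le> (n::nat) div p \<Longrightarrow> p \<le> n"
  by (metis div_less not_le not_one_le_zero)

lemma ap_intro:
  assumes "ap_char x h p"
  shows "abelian_period x h p"
proof -
  define m where "m = (length x - h) div p"
  have p1: "1 \<le> p" and hx: "h \<le> length x" and m1: "1 \<le> m"
    and s0: "parikh_sub (take h x) (seg x h p)"
    and bl: "\<forall>j. 1 \<le> j \<and> j < m \<longrightarrow> parikh (seg x (h+j*p) p) = parikh (seg x h p)"
    and sk: "parikh_sub (drop (h + m * p) x) (seg x h p)"
    using assms unfolding ap_char_def m_def by auto
  have hp: "h + p \<le> length x" using div_ge1_le[of "length x - h" p] m1 hx m_def by simp
  define us where "us = take h x # map (\<lambda>j. seg x (h+j*p) p) [0..<m] @ [drop (h+m*p) x]"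
  have lus: "length us = Suc (m+1)" by (simp add: us_def)
  have "concat us = take h x @ take (m*p) (drop h x) @ drop (h+m*p) x"
    by (simp add: us_def concat_blocks)
  also have "\<dots> = take (h + m*p) x @ drop (h+m*p) x" by (simp add: take_add)
  finally have cx: "concat us = x" by simp
  have u0: "us!0 = take h x" by (simp add: us_def)
  have ui: "us!(Suc j) = seg x (h+j*p) p" if "j < m" for j
    using that by (simp add: us_def nth_append)
  have u1: "us!1 = seg x h p" using ui[of 0] m1 by simp
  have uk: "us!(m+1) = drop (h+m*p) x" by (simp add: us_def nth_append)
  have l0: "length (us!0) = h" using u0 hx by simp
  have l1: "length (us!1) = p" using u1 hp by (simp add: seg_def)
  have mid: "\<forall>i. 1\<le>i \<and> i < m+1 \<longrightarrow> parikh (us!i) = parikh (us!1)"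
  proof (intro allI impI)
    fix i assume i: "1\<le>i \<and> i < m+1"
    then obtain j where j: "i = Suc j" "j < m" by (cases i) auto
    show "parikh (us!i) = parikh (us!1)"
    proof (cases "j = 0")
      case True then show ?thesis using j by simp
    next
      case False
      then show ?thesis using j ui[of j] u1 bl by simp
    qed
  qed
  show ?thesis
    unfolding abelian_period_def
    apply (rule conjI, fact p1)
    apply (rule exI[of _ us], rule exI[of _ "m+1"])
    using m1 lus cx l0 l1 s0 u0 u1 mid sk uk by simp
qed

lemma tailf:
  assumes "ap_char w h p" "(length w - h) mod p = t"
  shows "t < p \<and> t + p \<le> length w \<and> h + (length w - h) div p * p = length w - t
    \<and> parikh (seg w (length w - t - p) p) = parikh (seg w h p)
    \<and> parikh_sub (drop (length w - t) w) (seg w h p)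
    \<and> h + p \<le> length w"
proof -
  define m where "m = (length w - h) div p"
  have p1: "1 \<le> p" and hx: "h \<le> length w" and m1: "1 \<le> m"
    and bl: "\<forall>j. 1 \<le> j \<and> j < m \<longrightarrow> parikh (seg w (h+j*p) p) = parikh (seg w h p)"
    and sk: "parikh_sub (drop (h + m * p) w) (seg w h p)"
    using assms unfolding ap_char_def m_def by auto
  have eq: "length w - h = m*p + t" using assms(2) m_def by (metis div_mult_mod_eq)
  have tp: "t < p" using assms(2) p1 by (metis mod_less_divisor less_le_trans zero_less_one)
  have e2: "h + m*p = length w - t" using eq hx by simp
  have lb: "length w - t - p = h + (m-1)*p" using eq hx m1
    by (cases m) (auto simp: algebra_simps)
  have "parikh (seg w (h + (m-1)*p) p) = parikh (seg w h p)"
  proof (cases "m - 1 = 0")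
    case True then show ?thesis by simp
  next
    case False then show ?thesis using bl m1 by simp
  qed
  moreover have pm: "p \<le> m*p" using m1 by simp
  moreover have "t + p \<le> length w" using eq pm hx by linarith
  moreover have "h + p \<le> length w" using eq pm hx by linarith
  ultimately show ?thesis using tp e2 lb sk m_def by simp
qed


lemma seg_app: "i + l \<le> length w \<Longrightarrow> seg (w @ [a]) i l = seg w i l"
  by (simp add: seg_def)

lemma count_le_of_sub: "parikh_sub u v \<Longrightarrow> count_list u c \<le> count_list v c"
  by (simp add: parikh_sub_def parikh_def)

lemma key1:
  assumes aw: "ap_char w h p" and awa: "ap_char (w @ [a]) h p"
    and md: "(length w - h) mod p = t"
  shows "count_list (drop (length w - t) w) a < count_list (seg w (length w - t - p) p) a"
proof -
  define n where "n = length w"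
  define m where "m = (length w - h) div p"
  define v where "v = drop (n - t) w"
  have tf: "t < p" "t + p \<le> n" "h + m * p = n - t"
    "parikh (seg w (n - t - p) p) = parikh (seg w h p)" "h + p \<le> n"
    using tailf[OF aw md] unfolding n_def m_def by auto
  have eq: "n - h = m*p + t" using md m_def n_def by (metis div_mult_mod_eq)
  have hx: "h \<le> n" using tf by simp
  have lv: "length v = t" using tf v_def n_def by simp
  have p0: "0 < p" using tf by simp
  have Q: "count_list (seg w (n - t - p) p) a = count_list (seg w h p) a"
    using tf(4) by (metis parikh_def)
  have sa: "seg (w@[a]) h p = seg w h p" using seg_app tf(5) n_def by simp
  have dwa: "drop (n - t) (w @ [a]) = v @ [a]" using v_def n_def tf by simp
  have lwa: "length (w@[a]) - h = (m*p + t) + 1" using eq hx n_def by simp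
  show ?thesis
  proof (cases "t + 1 < p")
    case True
    have "length (w@[a]) - h = (t+1) + m*p" using lwa by simp
    moreover have "((t+1) + m*p) div p = m + (t+1) div p"
      using p0 div_mult_self1[of p "t+1" m] by simp
    moreover have "(t+1) div p = 0" using True by simp
    ultimately have dv: "(length (w@[a]) - h) div p = m" by simp
    have "parikh_sub (drop (h + m * p) (w@[a])) (seg (w@[a]) h p)"
      using awa dv unfolding ap_char_def by simp
    then have "parikh_sub (v @ [a]) (seg w h p)" using tf(3) dwa sa by simp
    then have "count_list (v@[a]) a \<le> count_list (seg w h p) a" by (rule count_le_of_sub)
    then show ?thesis using Q v_def n_def by simp
  next
    case False
    then have tp: "t + 1 = p" using tf by simp
    have "length (w@[a]) - h = (m+1)*p" using lwa tp by (simp add: algebra_simps)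
    then have dv: "(length (w@[a]) - h) div p = m + 1" using p0 by simp
    have m1: "1 \<le> m" using aw unfolding ap_char_def m_def by simp
    have "parikh (seg (w@[a]) (h+m*p) p) = parikh (seg (w@[a]) h p)"
      using awa dv m1 unfolding ap_char_def by simp
    moreover have "seg (w@[a]) (h+m*p) p = v @ [a]"
      using tf(3) dwa lv tp by (simp add: seg_def)
    ultimately have "parikh (v@[a]) = parikh (seg w h p)" using sa by simp
    then have "count_list (v@[a]) a = count_list (seg w h p) a" by (metis parikh_def)
    then show ?thesis using Q v_def n_def by simp
  qed
qed

lemma suffix_count:
  assumes "p1 \<le> p" "t + p \<le> length w"
  shows "count_list (seg w (length w - t - p1) p1) c \<le> count_list (seg w (length w - t - p) p) c"
proof -
  have "seg w (length w - t - p) p = seg w (length w - t - p) (p - p1) @ seg w (length w - t - p1) p1"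
  proof -
    have "take ((p - p1) + p1) (drop (length w - t - p) w)
       = take (p-p1) (drop (length w - t - p) w) @ take p1 (drop (p - p1) (drop (length w - t - p) w))"
      by (simp only: take_add)
    moreover have "drop (p - p1) (drop (length w - t - p) w) = drop (length w - t - p1) w"
    proof -
      have "p - p1 + (length w - t - p) = length w - t - p1" using assms by simp
      then show ?thesis by simp
    qed
    ultimately show ?thesis using assms by (simp add: seg_def)
  qed
  then show ?thesis by simp
qed


lemma extend:
  assumes aw: "ap_char w h p" and md: "(length w - h) mod p = t"
    and lt: "count_list (drop (length w - t) w) a < count_list (seg w (length w - t - p) p) a"
  shows "ap_char (w @ [a]) h p"
proof -
  define n where "n = length w"
  define m where "m = (length w - h) div p"
  define v where "v = drop (n - t) w"
  define S where "S = seg w h p"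
  have tf: "t < p" "t + p \<le> n" "h + m * p = n - t"
    "parikh (seg w (n - t - p) p) = parikh S" "h + p \<le> n"
    "parikh_sub v S"
    using tailf[OF aw md] unfolding n_def m_def v_def S_def by auto
  have p1: "1 \<le> p" and m1: "1 \<le> m" and s0: "parikh_sub (take h w) S"
    and bl: "\<forall>j. 1 \<le> j \<and> j < m \<longrightarrow> parikh (seg w (h+j*p) p) = parikh S"
    using aw unfolding ap_char_def m_def S_def by auto
  have eq: "n - h = m*p + t" using md m_def n_def by (metis div_mult_mod_eq)
  have hx: "h \<le> n" using tf by simp
  have lv: "length v = t" using tf v_def n_def by simp
  have lS: "length S = p" using tf S_def n_def by (simp add: seg_def)
  have p0: "0 < p" using p1 by simp
  have lta: "count_list v a < count_list S a"
    using lt tf(4) unfolding v_def n_def by (metis parikh_def)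
  have le_all: "\<forall>c. parikh (v@[a]) c \<le> parikh S c"
  proof
    fix c
    have "count_list v c \<le> count_list S c" using tf(6) by (rule count_le_of_sub)
    then show "parikh (v@[a]) c \<le> parikh S c" using lta by (cases "c = a") (auto simp: parikh_def)
  qed
  have sa: "seg (w@[a]) h p = S" using seg_app tf(5) n_def S_def by simp
  have tk: "take h (w@[a]) = take h w" using hx n_def by simp
  have dwa: "drop (n - t) (w @ [a]) = v @ [a]" using v_def n_def tf by simp
  have lwa: "length (w@[a]) - h = (m*p + t) + 1" using eq hx n_def by simp
  have blw: "seg (w@[a]) (h+j*p) p = seg w (h+j*p) p" if "j < m" for j
  proof -
    have "(j+1)*p \<le> m*p" using that by (intro mult_le_mono1) simp
    then have "h+j*p+p \<le> n" using tf(3) by (simp add: algebra_simps)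
    then show ?thesis using seg_app n_def by simp
  qed
  show ?thesis
  proof (cases "t + 1 < p")
    case True
    have "((t+1) + m*p) div p = m + (t+1) div p"
      using p0 div_mult_self1[of p "t+1" m] by simp
    moreover have "(t+1) div p = 0" using True by simp
    ultimately have dv: "(length (w@[a]) - h) div p = m" using lwa by (simp add: add.commute)
    have tail: "parikh_sub (drop (h + m*p) (w@[a])) S"
      using tf(3) dwa le_all lv lS True by (simp add: parikh_sub_def)
    show ?thesis unfolding ap_char_def dv sa tk
      using p1 hx n_def m1 s0 bl blw tail by auto
  next
    case False
    then have tp: "t + 1 = p" using tf by simp
    have "length (w@[a]) - h = (m+1)*p" using lwa tp by (simp add: algebra_simps)
    then have dv: "(length (w@[a]) - h) div p = m + 1" using p0 by simp
    have lastb: "seg (w@[a]) (h+m*p) p = v @ [a]"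
      using tf(3) dwa lv tp by (simp add: seg_def)
    have pl: "parikh (v@[a]) = parikh S" using parikh_le_eq[OF le_all] lv lS tp by simp
    have bl2: "\<forall>j. 1 \<le> j \<and> j < m + 1 \<longrightarrow> parikh (seg (w@[a]) (h+j*p) p) = parikh S"
    proof (intro allI impI)
      fix j assume j: "1 \<le> j \<and> j < m + 1"
      show "parikh (seg (w@[a]) (h+j*p) p) = parikh S"
      proof (cases "j = m")
        case True then show ?thesis using lastb pl by simp
      next
        case False then show ?thesis using j blw bl by simp
      qed
    qed
    have "h + (m+1)*p = length (w@[a])" using tf(3) tp hx eq n_def by (simp add: algebra_simps)
    then have tail: "parikh_sub (drop (h + (m+1)*p) (w@[a])) S"
      using lS p0 by (simp add: parikh_sub_def parikh_def)
    show ?thesis unfolding ap_char_def dv sa tk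
      using p1 hx n_def m1 s0 bl2 tail by auto
  qed
qed


theorem mainTheorem7:
  fixes w :: "'a list" and a :: 'a and h p :: "nat \<Rightarrow> nat" and s t :: nat
  assumes "s \<ge> 1"
    and "\<forall>i. 1 \<le> i \<and> i < s \<longrightarrow> ap_less (h i, p i) (h (Suc i), p (Suc i))"
    and "\<forall>i. 1 \<le> i \<and> i \<le> s \<longrightarrow> abelian_period w (h i) (p i)"
    and "\<forall>i. 1 \<le> i \<and> i \<le> s \<longrightarrow> (length w - h i) mod p i = t"
    and "t > 0"
    and "abelian_period (w @ [a]) (h 1) (p 1)"
  shows "\<forall>i. 2 \<le> i \<and> i \<le> s \<longrightarrow> abelian_period (w @ [a]) (h i) (p i)"
proof (intro allI impI)
  fix i assume i: "2 \<le> i \<and> i \<le> s"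
  have mono: "1 \<le> j \<Longrightarrow> j \<le> s \<Longrightarrow> p 1 \<le> p j" for j
  proof (induction j)
    case 0 then show ?case by simp
  next
    case (Suc k)
    show ?case
    proof (cases "k = 0")
      case True then show ?thesis by simp
    next
      case False
      then have "p 1 \<le> p k" using Suc by simp
      moreover have "ap_less (h k, p k) (h (Suc k), p (Suc k))"
        using assms(2) Suc False by simp
      ultimately show ?thesis unfolding ap_less_def by auto
    qed
  qed
  have a1: "ap_char w (h 1) (p 1)" using assms(3,1) ap_dest by blast
  have ai: "ap_char w (h i) (p i)" using assms(3) i by (intro ap_dest) simp
  have awa1: "ap_char (w @ [a]) (h 1) (p 1)" using assms(6) ap_dest by blast
  have md1: "(length w - h 1) mod p 1 = t" using assms(4,1) by blast
  have mdi: "(length w - h i) mod p i = t" using assms(4) i by simp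
  have "count_list (drop (length w - t) w) a < count_list (seg w (length w - t - p 1) (p 1)) a"
    by (rule key1[OF a1 awa1 md1])
  also have "\<dots> \<le> count_list (seg w (length w - t - p i) (p i)) a"
    using suffix_count[of "p 1" "p i" t w a] mono[of i] i tailf[OF ai mdi] by simp
  finally have "ap_char (w @ [a]) (h i) (p i)" by (rule extend[OF ai mdi])
  then show "abelian_period (w @ [a]) (h i) (p i)" by (rule ap_intro)
qed

end
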